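(* Let $X,Y$ be a section-pair, let $t\ge1$ be odd, and let $X_1,Y_1;\dots;X_t,Y_t$ be subsection pairs with the $X_i$ pairwise vertex-disjoint and the $Y_i$ pairwise vertex-disjoint, such that for all $1\le i<j\le t$, $X_i$ is above $X_j$ and $Y_i$ is below $Y_j$. Let $d_1,\dots,d_t\ge1$ be integers. Suppose that for each $1\le i\le t$ there are two paths $Q_i^R,Q_i^B$ in $H(X_i,Y_i)$ with $|Q_i^R|-|Q_i^B|\ge d_i$, which both go between $x_i^{t}$ and $y_i^{t}$ if $i$ is odd, and both go between $x_i^{b}$ and $y_i^{b}$ if $i$ is even. Let $D:=\max_{1\le i\le t}(|X_i|+|Y_i|)$. Then there are paths $P_1,\dots,P_{(t+3)/2}$ in $H(X,Y)$ between $x^{t}$ and $y^{t}$ such that $|P_{(t+3)/2}|-|P_1|\ge\sum_{i=1}^t d_i$ and $1\le |P_{i+1}|-|P_i|\le 2D$ for every $1\le i\le (t+1)/2$.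
   Context: A section-pair in a graph $G$ is a pair $X,Y$ of vertex-disjoint paths; the two endpoints of $X$ are designated its top $x^{t}$ and bottom $x^{b}$, and those of $Y$ its top $y^t$ and bottom $y^b$. For distinct $x_1,x_2\in X$, $x_1$ is above $x_2$ if $x_1$ is closer to $x^t$ along $X$ than $x_2$, otherwise below; similarly in $Y$. For vertex sets $A,B\subseteq X$ (or $\subseteq Y$), $A$ is above (resp. below) $B$ if every vertex of $A$ is above (resp. below) every vertex of $B$. A chord is an edge of $G$ with one endpoint in $X$ and one in $Y$. A subsection pair of $X,Y$ is a section-pair $X',Y'$ where $X'$ is a subpath of $X$ and $Y'$ a subpath of $Y$, with top of $X'$ its endpoint closer to $x^t$ and bottom the other one (similarly for $Y'$); $x_i^t,x_i^b,y_i^t,y_i^b$ denote the tops and bottoms of $X_i,Y_i$. For a section-pair $X',Y'$, $H(X',Y')$ is the graph with vertex set $V(X')\cup V(Y')$ whose edges are the edges of $X'$, the edges of $Y'$, and the chords with one endpoint in $X'$ and one in $Y'$. $|P|$ denotes the number of edges of a path $P$. *)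

theory Defs
  imports Main "HOL-Library.Sublist"
begin

definition simple_graph :: "('v \<Rightarrow> 'v \<Rightarrow> bool) \<Rightarrow> bool" where
  "simple_graph E \<longleftrightarrow> (\<forall>u v. E u v \<longrightarrow> E v u) \<and> (\<forall>u. \<not> E u u)"

definition is_path :: "('v \<Rightarrow> 'v \<Rightarrow> bool) \<Rightarrow> 'v list \<Rightarrow> bool" where
  "is_path E P \<longleftrightarrow> P \<noteq> [] \<and> distinct P \<and> successively E P"

definition plen :: "'v list \<Rightarrow> nat" where
  "plen P = length P - 1"

text \<open>Section pair: two vertex-disjoint paths of G; top = hd, bottom = last.\<close>
definition section_pair :: "('v \<Rightarrow> 'v \<Rightarrow> bool) \<Rightarrow> 'v list \<Rightarrow> 'v list \<Rightarrow> bool" where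
  "section_pair E X Y \<longleftrightarrow> is_path E X \<and> is_path E Y \<and> set X \<inter> set Y = {}"

text \<open>Subsection pair: X' a subpath of X, Y' a subpath of Y, oriented consistently
(top of X' is the end closer to the top of X).\<close>
definition subsection_pair :: "'v list \<Rightarrow> 'v list \<Rightarrow> 'v list \<Rightarrow> 'v list \<Rightarrow> bool" where
  "subsection_pair X Y X' Y' \<longleftrightarrow> X' \<noteq> [] \<and> sublist X' X \<and> Y' \<noteq> [] \<and> sublist Y' Y"

definition above :: "'v list \<Rightarrow> 'v set \<Rightarrow> 'v set \<Rightarrow> bool" where
  "above X A B \<longleftrightarrow> (\<forall>a\<in>A. \<forall>b\<in>B. \<exists>i j. i < j \<and> j < length X \<and> X ! i = a \<and> X ! j = b)"

definition below :: "'v list \<Rightarrow> 'v set \<Rightarrow> 'v set \<Rightarrow> bool" where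
  "below X A B \<longleftrightarrow> above X B A"

definition path_edge :: "'v list \<Rightarrow> 'v \<Rightarrow> 'v \<Rightarrow> bool" where
  "path_edge P u v \<longleftrightarrow> (\<exists>i. Suc i < length P \<and>
      ((P ! i = u \<and> P ! Suc i = v) \<or> (P ! i = v \<and> P ! Suc i = u)))"

definition H_edge :: "('v \<Rightarrow> 'v \<Rightarrow> bool) \<Rightarrow> 'v list \<Rightarrow> 'v list \<Rightarrow> 'v \<Rightarrow> 'v \<Rightarrow> bool" where
  "H_edge E X Y u v \<longleftrightarrow> path_edge X u v \<or> path_edge Y u v \<or>
     (E u v \<and> ((u \<in> set X \<and> v \<in> set Y) \<or> (u \<in> set Y \<and> v \<in> set X)))"

definition path_in_H :: "('v \<Rightarrow> 'v \<Rightarrow> bool) \<Rightarrow> 'v list \<Rightarrow> 'v list \<Rightarrow> 'v list \<Rightarrow> bool" where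
  "path_in_H E X Y P \<longleftrightarrow> is_path (H_edge E X Y) P \<and> set P \<subseteq> set X \<union> set Y"

definition path_between :: "'v list \<Rightarrow> 'v \<Rightarrow> 'v \<Rightarrow> bool" where
  "path_between P a b \<longleftrightarrow> (hd P = a \<and> last P = b) \<or> (hd P = b \<and> last P = a)"

end

theory Submission imports Defs begin

definition seg :: "'v list \<Rightarrow> nat \<Rightarrow> nat \<Rightarrow> 'v list" where
  "seg L i j = map ((!) L) [i..<Suc j]"

definition glue :: "'v list \<Rightarrow> 'v list \<Rightarrow> 'v list" where
  "glue A B = A @ tl B"

lemma glue_path:
  assumes "is_path R A" "is_path R B" "last A = hd B" "set A \<inter> set B \<subseteq> {hd B}"
  shows "is_path R (glue A B)" "set (glue A B) = set A \<union> set B"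
    "hd (glue A B) = hd A" "last (glue A B) = last B" "plen (glue A B) = plen A + plen B"
proof -
  have A: "A \<noteq> []" "distinct A" "successively R A" and B: "B \<noteq> []" "distinct B" "successively R B"
    using assms(1,2) by (auto simp: is_path_def)
  obtain b B' where Bc: "B = b # B'" using B(1) by (cases B) auto
  have sB: "successively R B'" "B' = [] \<or> R b (hd B')" using B(3) by (auto simp: Bc successively_Cons)
  have "b \<notin> set B'" using B(2) Bc by auto
  then have dis: "set A \<inter> set B' = {}" using assms(4) Bc by auto
  show "is_path R (glue A B)" unfolding is_path_def glue_def
    using A sB B(2) dis assms(3) Bc by (auto simp: successively_append_iff)
  show "set (glue A B) = set A \<union> set B" unfolding glue_def using Bc assms(3) A(1)
    by auto
  show "hd (glue A B) = hd A" unfolding glue_def using A(1) by simp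
  show "last (glue A B) = last B" unfolding glue_def using Bc assms(3) by (cases B') auto
  show "plen (glue A B) = plen A + plen B" unfolding glue_def plen_def using Bc A(1) by (cases A) auto
qed

lemma seg_facts:
  assumes "i \<le> j" "j < length L" "distinct L" "\<forall>k. Suc k < length L \<longrightarrow> R (L!k) (L!Suc k)"
  shows "is_path R (seg L i j)" "hd (seg L i j) = L!i" "last (seg L i j) = L!j"
    "set (seg L i j) = {L!k | k. i \<le> k \<and> k \<le> j}" "plen (seg L i j) = j - i"
proof -
  show "is_path R (seg L i j)" unfolding is_path_def seg_def
  proof (intro conjI)
    show "map ((!) L) [i..<Suc j] \<noteq> []" using assms(1) by simp
    show "distinct (map ((!) L) [i..<Suc j])" using assms
      by (auto simp: distinct_map inj_on_def nth_eq_iff_index_eq)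
    show "successively R (map ((!) L) [i..<Suc j])"
      unfolding successively_conv_nth
    proof (intro allI impI)
      fix k assume k: "Suc k < length (map ((!) L) [i..<Suc j])"
      then have "Suc (i + k) < length L" using assms(1,2) by simp
      then show "R (map ((!) L) [i..<Suc j] ! k) (map ((!) L) [i..<Suc j] ! Suc k)"
        using assms(4)[rule_format, of "i+k"] k by (simp del: upt_Suc add: nth_upt)
    qed
  qed
  show "hd (seg L i j) = L!i" using assms(1) by (simp add: seg_def hd_map upt_rec)
  show "last (seg L i j) = L!j" using assms(1) by (simp add: seg_def last_map)
  show "set (seg L i j) = {L!k | k. i \<le> k \<and> k \<le> j}" by (auto simp: seg_def)
  show "plen (seg L i j) = j - i" using assms(1) by (simp add: seg_def plen_def)
qed

lemma rev_path:
  assumes "is_path R P" "\<And>u v. R u v \<Longrightarrow> R v u"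
  shows "is_path R (rev P)"
  using assms unfolding is_path_def by (auto elim: successively_mono)

lemma plen_rev[simp]: "plen (rev P) = plen P" by (simp add: plen_def)

fun Wc :: "'v list \<Rightarrow> 'v list \<Rightarrow> (nat \<Rightarrow> nat) \<Rightarrow> (nat \<Rightarrow> nat) \<Rightarrow> (nat \<Rightarrow> nat) \<Rightarrow> (nat \<Rightarrow> nat)
   \<Rightarrow> (nat \<Rightarrow> 'v list) \<Rightarrow> nat \<Rightarrow> 'v list" where
  "Wc X Y a b al be Q 0 = [X!0]"
| "Wc X Y a b al be Q (Suc n) = glue (glue (Wc X Y a b al be Q n)
     (if even n then seg X (if n = 0 then 0 else b n) (a (Suc n)) else rev (seg Y (be (Suc n)) (al n))))
     (Q (Suc n))"

definition connS :: "(nat \<Rightarrow> nat) \<Rightarrow> (nat \<Rightarrow> nat) \<Rightarrow> (nat \<Rightarrow> nat) \<Rightarrow> (nat \<Rightarrow> nat) \<Rightarrow> nat \<Rightarrow> nat" where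
  "connS a b al be m = (if even m then a (Suc m) - (if m = 0 then 0 else b m) else al m - be (Suc m))"

locale cs =
  fixes R :: "'v \<Rightarrow> 'v \<Rightarrow> bool" and X Y :: "'v list" and t :: nat and a b al be :: "nat \<Rightarrow> nat"
  assumes symR: "\<And>u v. R u v \<Longrightarrow> R v u"
  and dX: "distinct X" and dY: "distinct Y" and XY: "set X \<inter> set Y = {}"
  and RX: "\<And>k. Suc k < length X \<Longrightarrow> R (X!k) (X!Suc k)"
  and RY: "\<And>k. Suc k < length Y \<Longrightarrow> R (Y!k) (Y!Suc k)"
  and t1: "1 \<le> t"
  and ab: "\<And>i. i \<in> {1..t} \<Longrightarrow> a i \<le> b i \<and> b i < length X \<and> al i \<le> be i \<and> be i < length Y"
  and ordX: "\<And>i j. 1 \<le> i \<Longrightarrow> i < j \<Longrightarrow> j \<le> t \<Longrightarrow> b i < a j"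
  and ordY: "\<And>i j. 1 \<le> i \<Longrightarrow> i < j \<Longrightarrow> j \<le> t \<Longrightarrow> be j < al i"
begin

definition Qok :: "(nat \<Rightarrow> 'v list) \<Rightarrow> nat \<Rightarrow> bool" where
  "Qok Q i \<longleftrightarrow> is_path R (Q i) \<and>
     set (Q i) \<subseteq> {X!k|k. a i \<le> k \<and> k \<le> b i} \<union> {Y!k|k. al i \<le> k \<and> k \<le> be i} \<and>
     (if odd i then hd (Q i) = X!(a i) \<and> last (Q i) = Y!(al i)
      else hd (Q i) = Y!(be i) \<and> last (Q i) = X!(b i))"

lemma RXa: "\<forall>k. Suc k < length X \<longrightarrow> R (X!k) (X!Suc k)" using RX by blast
lemma RYa: "\<forall>k. Suc k < length Y \<longrightarrow> R (Y!k) (Y!Suc k)" using RY by blast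

lemma lenX: "0 < length X" using ab[of 1] t1 by auto

lemma injX: "k < length X \<Longrightarrow> k' < length X \<Longrightarrow> X!k = X!k' \<longleftrightarrow> k = k'"
  using dX by (simp add: nth_eq_iff_index_eq)
lemma injY: "k < length Y \<Longrightarrow> k' < length Y \<Longrightarrow> Y!k = Y!k' \<longleftrightarrow> k = k'"
  using dY by (simp add: nth_eq_iff_index_eq)
lemma XneY: "k < length X \<Longrightarrow> k' < length Y \<Longrightarrow> X!k \<noteq> Y!k'"
  using XY by (metis disjoint_iff nth_mem)

lemma reg_mono: "A \<subseteq> {X!k|k. k \<le> s} \<union> B \<Longrightarrow> s \<le> s' \<Longrightarrow> A \<subseteq> {X!k|k. k \<le> s'} \<union> B"
  by (auto dest!: subsetD)
lemma reg_monoY: "A \<subseteq> C \<union> {Y!k|k. s \<le> k \<and> k < length Y} \<Longrightarrow> s' \<le> s \<Longrightarrow> A \<subseteq> C \<union> {Y!k|k. s' \<le> k \<and> k < length Y}"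
  by (auto dest!: subsetD)
lemma regQ: "A \<subseteq> {X!k|k. p \<le> k \<and> k \<le> q} \<union> {Y!k|k. l \<le> k \<and> k \<le> e} \<Longrightarrow> e < length Y \<Longrightarrow>
   A \<subseteq> {X!k|k. k \<le> q} \<union> {Y!k|k. l \<le> k \<and> k < length Y}"
  by (auto dest!: subsetD)
lemma regSX: "s \<le> e \<Longrightarrow> {X!k|k. s \<le> k \<and> k \<le> e} \<subseteq> {X!k|k. k \<le> e} \<union> B"
  by auto
lemma regSY: "s \<le> e \<Longrightarrow> e < length Y \<Longrightarrow> {Y!k|k. s \<le> k \<and> k \<le> e} \<subseteq> C \<union> {Y!k|k. s \<le> k \<and> k < length Y}"
  by auto

lemma meetX:
  assumes "v \<in> {X!k|k. k \<le> s} \<union> {Y!k|k. l \<le> k \<and> k < length Y}"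
    "v \<in> {X!k|k. s \<le> k \<and> k \<le> e} \<union> {Y!k|k. l' \<le> k \<and> k \<le> e'}"
    "e < length X" "e' < l \<or> e' < l'" "s \<le> e" "e' < length Y \<or> e' < l'"
  shows "v = X!s"
proof -
  from assms(2) consider k where "v = X!k" "s \<le> k" "k \<le> e" | k where "v = Y!k" "l' \<le> k" "k \<le> e'" by blast
  then show ?thesis
  proof cases
    case (1 k)
    from assms(1) consider j where "v = X!j" "j \<le> s" | j where "v = Y!j" "j < length Y" by blast
    then show ?thesis
    proof cases
      case (1 j)
      then show ?thesis using \<open>v = X!k\<close> \<open>s \<le> k\<close> \<open>k \<le> e\<close> assms(3) injX[of j k] by auto
    next
      case (2 j)
      then show ?thesis using \<open>v = X!k\<close> \<open>k \<le> e\<close> assms(3) XneY[of k j] by auto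
    qed
  next
    case (2 k)
    then have kY: "k < length Y" and el: "e' < l" using assms(4,6) by auto
    from assms(1) consider j where "v = X!j" "j \<le> s" | j where "v = Y!j" "l \<le> j" "j < length Y" by blast
    then show ?thesis
    proof cases
      case (1 j)
      then show ?thesis using \<open>v = Y!k\<close> kY assms(3,5) XneY[of j k] by auto
    next
      case (2 j)
      then show ?thesis using \<open>v = Y!k\<close> \<open>k \<le> e'\<close> kY el injY[of j k] by auto
    qed
  qed
qed

lemma meetY:
  assumes "v \<in> {X!k|k. k \<le> p} \<union> {Y!k|k. s \<le> k \<and> k < length Y}"
    "v \<in> {X!k|k. q \<le> k \<and> k \<le> e} \<union> {Y!k|k. l' \<le> k \<and> k \<le> s}"
    "p < q" "e < length X" "s < length Y" "p < length X"
  shows "v = Y!s"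
proof -
  from assms(2) consider k where "v = X!k" "q \<le> k" "k \<le> e" | k where "v = Y!k" "k \<le> s" by blast
  then show ?thesis
  proof cases
    case (1 k)
    from assms(1) consider j where "v = X!j" "j \<le> p" | j where "v = Y!j" "j < length Y" by blast
    then show ?thesis
    proof cases
      case (1 j)
      then show ?thesis using \<open>v = X!k\<close> \<open>q \<le> k\<close> \<open>k \<le> e\<close> assms(3,4) injX[of j k] by auto
    next
      case (2 j)
      then show ?thesis using \<open>v = X!k\<close> \<open>k \<le> e\<close> assms(4) XneY[of k j] by auto
    qed
  next
    case (2 k)
    from assms(1) consider j where "v = X!j" "j \<le> p" | j where "v = Y!j" "s \<le> j" "j < length Y" by blast
    then show ?thesis
    proof cases
      case (1 j)
      then show ?thesis using \<open>v = Y!k\<close> \<open>k \<le> s\<close> assms(3,4,5,6) XneY[of j k] by auto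
    next
      case (2 j)
      then show ?thesis using \<open>v = Y!k\<close> \<open>k \<le> s\<close> assms(5) injY[of j k] by auto
    qed
  qed
qed

abbreviation W where "W Q n \<equiv> Wc X Y a b al be Q n"

lemma main:
  "n \<le> t \<Longrightarrow> (\<forall>i\<in>{1..n}. Qok Q i) \<Longrightarrow>
    is_path R (W Q n) \<and> hd (W Q n) = X!0 \<and>
    last (W Q n) = (if n = 0 then X!0 else if odd n then Y!(al n) else X!(b n)) \<and>
    set (W Q n) \<subseteq> {X!k|k. k \<le> (if n = 0 then 0 else b n)} \<union>
       {Y!k|k. (if n = 0 then length Y else al n) \<le> k \<and> k < length Y} \<and>
    plen (W Q n) = (\<Sum>m<n. connS a b al be m) + (\<Sum>i\<in>{1..n}. plen (Q i))"
proof (induction n)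
  case 0
  then show ?case using lenX by (auto simp: is_path_def plen_def)
next
  case (Suc n)
  define m where "m = Suc n"
  have IH: "is_path R (W Q n)" "hd (W Q n) = X!0"
    "last (W Q n) = (if n = 0 then X!0 else if odd n then Y!(al n) else X!(b n))"
    "set (W Q n) \<subseteq> {X!k|k. k \<le> (if n = 0 then 0 else b n)} \<union>
       {Y!k|k. (if n = 0 then length Y else al n) \<le> k \<and> k < length Y}"
    "plen (W Q n) = (\<Sum>m<n. connS a b al be m) + (\<Sum>i\<in>{1..n}. plen (Q i))"
    using Suc by auto
  have Qm: "Qok Q m" using Suc.prems m_def by auto
  have abm: "a m \<le> b m" "b m < length X" "al m \<le> be m" "be m < length Y"
    using ab[of m] Suc.prems m_def by auto
  have Qm': "is_path R (Q m)" "set (Q m) \<subseteq> {X!k|k. a m \<le> k \<and> k \<le> b m} \<union> {Y!k|k. al m \<le> k \<and> k \<le> be m}"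
    using Qm by (auto simp: Qok_def)
  have abn: "n \<noteq> 0 \<Longrightarrow> a n \<le> b n \<and> b n < length X \<and> al n \<le> be n \<and> be n < length Y"
    using ab[of n] Suc.prems by auto
  have oX: "n \<noteq> 0 \<Longrightarrow> b n < a m" and oY: "n \<noteq> 0 \<Longrightarrow> be m < al n"
    using ordX[of n m] ordY[of n m] Suc.prems m_def by auto
  show ?case
  proof (cases "even n")
    case True
    define s where "s = (if n = 0 then 0 else b n)"
    define yl where "yl = (if n = 0 then length Y else al n)"
    have sa: "s \<le> a m" using oX s_def by auto
    have Wm: "W Q m = glue (glue (W Q n) (seg X s (a m))) (Q m)"
      using True by (simp add: m_def s_def)
    have Qh: "hd (Q m) = X!(a m)" "last (Q m) = Y!(al m)" using Qm True m_def by (auto simp: Qok_def)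
    have am: "a m < length X" using abm by simp
    note S = seg_facts[OF sa am dX RXa]
    have lW: "last (W Q n) = X!s" using IH(3) True s_def by auto
    have sW: "set (W Q n) \<subseteq> {X!k|k. k \<le> s} \<union> {Y!k|k. yl \<le> k \<and> k < length Y}"
      using IH(4) s_def yl_def by simp
    have i1: "set (W Q n) \<inter> set (seg X s (a m)) \<subseteq> {hd (seg X s (a m))}"
    proof
      fix v assume v: "v \<in> set (W Q n) \<inter> set (seg X s (a m))"
      have v2: "v \<in> {X!k|k. s \<le> k \<and> k \<le> a m} \<union> {Y!k|k. 1 \<le> k \<and> k \<le> 0}" using v S(4) by auto
      have v1: "v \<in> {X!k|k. k \<le> s} \<union> {Y!k|k. yl \<le> k \<and> k < length Y}" using v sW by blast
      have "v = X!s" using meetX[OF v1 v2 am _ sa] by auto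
      then show "v \<in> {hd (seg X s (a m))}" using S(2) by simp
    qed
    have e1: "last (W Q n) = hd (seg X s (a m))" using lW S(2) by simp
    note G1 = glue_path[OF IH(1) S(1) e1 i1]
    have sG1: "set (glue (W Q n) (seg X s (a m))) \<subseteq> {X!k|k. k \<le> a m} \<union> {Y!k|k. yl \<le> k \<and> k < length Y}"
    proof -
      have "set (W Q n) \<union> set (seg X s (a m)) \<subseteq> {X!k|k. k \<le> a m} \<union> {Y!k|k. yl \<le> k \<and> k < length Y}"
        unfolding S(4) by (rule Un_least[OF reg_mono[OF sW sa] regSX[OF sa]])
      then show ?thesis by (simp only: G1(2))
    qed
    have byl: "be m < yl" using abm oY yl_def by auto
    have i2: "set (glue (W Q n) (seg X s (a m))) \<inter> set (Q m) \<subseteq> {hd (Q m)}"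
    proof
      fix v assume v: "v \<in> set (glue (W Q n) (seg X s (a m))) \<inter> set (Q m)"
      have v1: "v \<in> {X!k|k. k \<le> a m} \<union> {Y!k|k. yl \<le> k \<and> k < length Y}" using v sG1 by blast
      have v2: "v \<in> {X!k|k. a m \<le> k \<and> k \<le> b m} \<union> {Y!k|k. al m \<le> k \<and> k \<le> be m}" using v Qm'(2) by blast
      have "v = X!(a m)" using meetX[OF v1 v2 abm(2) _ abm(1)] byl abm(4) by auto
      then show "v \<in> {hd (Q m)}" using Qh by simp
    qed
    have e2: "last (glue (W Q n) (seg X s (a m))) = hd (Q m)" using G1(4) Qh S(3) by simp
    note G2 = glue_path[OF G1(1) Qm'(1) e2 i2]
    have "al m \<le> yl" using byl abm by simp
    from reg_monoY[OF reg_mono[OF sG1 abm(1)] this]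
    have "set (W Q m) \<subseteq> {X!k|k. k \<le> b m} \<union> {Y!k|k. al m \<le> k \<and> k < length Y}"
      unfolding Wm G2(2) by (rule Un_least[OF _ regQ[OF Qm'(2) abm(4)]])
    moreover have "plen (W Q m) = (\<Sum>m<m. connS a b al be m) + (\<Sum>i\<in>{1..m}. plen (Q i))"
      unfolding Wm G2(5) G1(5) S(5) IH(5) using True
      by (simp add: m_def connS_def s_def)
    moreover have "is_path R (W Q m)" "hd (W Q m) = X!0" "last (W Q m) = Y!(al m)"
      using G2(1,3,4) G1(3) IH(2) Qh unfolding Wm by simp_all
    ultimately show ?thesis using True unfolding m_def by simp
  next
    case False
    then have n0: "n \<noteq> 0" by (cases n) auto
    have Wm: "W Q m = glue (glue (W Q n) (rev (seg Y (be m) (al n)))) (Q m)"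
      using False by (simp add: m_def)
    have Qh: "hd (Q m) = Y!(be m)" "last (Q m) = X!(b m)" using Qm False m_def by (auto simp: Qok_def)
    have bea: "be m \<le> al n" and aln: "al n < length Y" using oY[OF n0] abn[OF n0] by auto
    have bn: "b n < length X" using abn[OF n0] by auto
    note S = seg_facts[OF bea aln dY RYa]
    have Sr: "is_path R (rev (seg Y (be m) (al n)))" using rev_path[OF S(1) symR] .
    have Srh: "hd (rev (seg Y (be m) (al n))) = Y!(al n)" "last (rev (seg Y (be m) (al n))) = Y!(be m)"
      using S(2,3) by (auto simp: hd_rev last_rev)
    have lW: "last (W Q n) = Y!(al n)" using IH(3) False by auto
    have sW: "set (W Q n) \<subseteq> {X!k|k. k \<le> b n} \<union> {Y!k|k. al n \<le> k \<and> k < length Y}"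
      using IH(4) n0 by simp
    have i1: "set (W Q n) \<inter> set (rev (seg Y (be m) (al n))) \<subseteq> {hd (rev (seg Y (be m) (al n)))}"
    proof
      fix v assume v: "v \<in> set (W Q n) \<inter> set (rev (seg Y (be m) (al n)))"
      have v2: "v \<in> {X!k|k. Suc (b n) \<le> k \<and> k \<le> b n} \<union> {Y!k|k. be m \<le> k \<and> k \<le> al n}" using v S(4) by auto
      have v1: "v \<in> {X!k|k. k \<le> b n} \<union> {Y!k|k. al n \<le> k \<and> k < length Y}" using v sW by blast
      from meetY[OF v1 v2 _ bn aln bn] have "v = Y!(al n)" by simp
      then show "v \<in> {hd (rev (seg Y (be m) (al n)))}" using Srh by simp
    qed
    have e1: "last (W Q n) = hd (rev (seg Y (be m) (al n)))" using lW Srh by simp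
    note G1 = glue_path[OF IH(1) Sr e1 i1]
    have sG1: "set (glue (W Q n) (rev (seg Y (be m) (al n)))) \<subseteq> {X!k|k. k \<le> b n} \<union>
       {Y!k|k. be m \<le> k \<and> k < length Y}"
    proof -
      have "set (W Q n) \<union> set (rev (seg Y (be m) (al n))) \<subseteq> {X!k|k. k \<le> b n} \<union> {Y!k|k. be m \<le> k \<and> k < length Y}"
        unfolding set_rev S(4) by (rule Un_least[OF reg_monoY[OF sW bea] regSY[OF bea aln]])
      then show ?thesis by (simp only: G1(2))
    qed
    have i2: "set (glue (W Q n) (rev (seg Y (be m) (al n)))) \<inter> set (Q m) \<subseteq> {hd (Q m)}"
    proof
      fix v assume v: "v \<in> set (glue (W Q n) (rev (seg Y (be m) (al n)))) \<inter> set (Q m)"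
      have v1: "v \<in> {X!k|k. k \<le> b n} \<union> {Y!k|k. be m \<le> k \<and> k < length Y}" using v sG1 by blast
      have v2: "v \<in> {X!k|k. a m \<le> k \<and> k \<le> b m} \<union> {Y!k|k. al m \<le> k \<and> k \<le> be m}" using v Qm'(2) by blast
      have "v = Y!(be m)" using meetY[OF v1 v2 oX[OF n0] abm(2) abm(4) bn] .
      then show "v \<in> {hd (Q m)}" using Qh by simp
    qed
    have e2: "last (glue (W Q n) (rev (seg Y (be m) (al n)))) = hd (Q m)" using G1(4) Qh Srh by simp
    note G2 = glue_path[OF G1(1) Qm'(1) e2 i2]
    have "b n \<le> b m" using oX[OF n0] abm by simp
    from reg_monoY[OF reg_mono[OF sG1 this], of "al m"] abm
    have "set (W Q m) \<subseteq> {X!k|k. k \<le> b m} \<union> {Y!k|k. al m \<le> k \<and> k < length Y}"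
      unfolding Wm G2(2) by (intro Un_least[OF _ regQ[OF Qm'(2) abm(4)]]) simp
    moreover have "plen (W Q m) = (\<Sum>m<m. connS a b al be m) + (\<Sum>i\<in>{1..m}. plen (Q i))"
      unfolding Wm G2(5) G1(5) plen_rev S(5) IH(5) using False
      by (simp add: m_def connS_def)
    moreover have "is_path R (W Q m)" "hd (W Q m) = X!0" "last (W Q m) = X!(b m)"
      using G2(1,3,4) G1(3) IH(2) Qh unfolding Wm by simp_all
    ultimately show ?thesis using False unfolding m_def by simp
  qed
qed

lemma final:
  assumes "odd t" "\<forall>i\<in>{1..t}. Qok Q i"
  shows "is_path R (glue (W Q t) (rev (seg Y 0 (al t)))) \<and> hd (glue (W Q t) (rev (seg Y 0 (al t)))) = X!0 \<and>
    last (glue (W Q t) (rev (seg Y 0 (al t)))) = Y!0 \<and>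
    set (glue (W Q t) (rev (seg Y 0 (al t)))) \<subseteq> set X \<union> set Y \<and>
    plen (glue (W Q t) (rev (seg Y 0 (al t)))) = (\<Sum>m<t. connS a b al be m) + al t + (\<Sum>i\<in>{1..t}. plen (Q i))"
proof -
  have t0: "t \<noteq> 0" using t1 by simp
  have M: "is_path R (W Q t)" "hd (W Q t) = X!0" "last (W Q t) = Y!(al t)"
    "set (W Q t) \<subseteq> {X!k|k. k \<le> b t} \<union> {Y!k|k. al t \<le> k \<and> k < length Y}"
    "plen (W Q t) = (\<Sum>m<t. connS a b al be m) + (\<Sum>i\<in>{1..t}. plen (Q i))"
    using main[of t Q] assms t0 by auto
  have abt: "b t < length X" "al t < length Y" using ab[of t] t1 by auto
  note S = seg_facts[OF _ abt(2) dY RYa, of 0, simplified]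
  have Sr: "is_path R (rev (seg Y 0 (al t)))" using rev_path[OF S(1) symR] .
  have Srh: "hd (rev (seg Y 0 (al t))) = Y!(al t)" "last (rev (seg Y 0 (al t))) = Y!0"
    using S(2,3) by (auto simp: hd_rev last_rev)
  have i1: "set (W Q t) \<inter> set (rev (seg Y 0 (al t))) \<subseteq> {hd (rev (seg Y 0 (al t)))}"
  proof
    fix v assume v: "v \<in> set (W Q t) \<inter> set (rev (seg Y 0 (al t)))"
    have v2: "v \<in> {X!k|k. Suc (b t) \<le> k \<and> k \<le> b t} \<union> {Y!k|k. 0 \<le> k \<and> k \<le> al t}" using v S(4) by auto
    have v1: "v \<in> {X!k|k. k \<le> b t} \<union> {Y!k|k. al t \<le> k \<and> k < length Y}" using v M(4) by blast
    from meetY[OF v1 v2 _ abt(1) abt(2) abt(1)] have "v = Y!(al t)" by simp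
    then show "v \<in> {hd (rev (seg Y 0 (al t)))}" using Srh by simp
  qed
  have e1: "last (W Q t) = hd (rev (seg Y 0 (al t)))" using M(3) Srh by simp
  note G = glue_path[OF M(1) Sr e1 i1]
  have "set (W Q t) \<subseteq> set X \<union> set Y"
  proof
    fix v assume "v \<in> set (W Q t)"
    then have "v \<in> {X!k|k. k \<le> b t} \<union> {Y!k|k. al t \<le> k \<and> k < length Y}" using M(4) by blast
    then show "v \<in> set X \<union> set Y" using abt by auto
  qed
  moreover have "set (rev (seg Y 0 (al t))) \<subseteq> set Y" using S(4) abt by auto
  ultimately have "set (glue (W Q t) (rev (seg Y 0 (al t)))) \<subseteq> set X \<union> set Y"
    unfolding G(2) by blast
  then show ?thesis using G(1,3,4,5) M(2,5) Srh S(5) by simp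
qed

end

lemma arith_part:
  fixes r bb d :: "nat \<Rightarrow> int" and D :: int and t :: nat
  assumes t: "odd t" and H: "\<forall>i\<in>{1..t}. d i \<le> r i - bb i \<and> 1 \<le> d i \<and> r i - bb i \<le> D"
  shows "(\<Sum>i=1..t. if i+3 \<le> 2*((t+3) div 2) then r i else bb i) - (\<Sum>i=1..t. if i+3 \<le> 2*1 then r i else bb i)
           \<ge> (\<Sum>i=1..t. d i)"
    and "k \<in> {1..(t+1) div 2} \<Longrightarrow>
       1 \<le> (\<Sum>i=1..t. if i+3 \<le> 2*(k+1) then r i else bb i) - (\<Sum>i=1..t. if i+3 \<le> 2*k then r i else bb i) \<and>
       (\<Sum>i=1..t. if i+3 \<le> 2*(k+1) then r i else bb i) - (\<Sum>i=1..t. if i+3 \<le> 2*k then r i else bb i) \<le> 2*D"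
proof -
  have e: "2*((t+3) div 2) = t + 3" using t by (auto elim: oddE)
  have "(\<Sum>i=1..t. if i+3 \<le> 2*((t+3) div 2) then r i else bb i) - (\<Sum>i=1..t. if i+3 \<le> 2*1 then r i else bb i)
      = (\<Sum>i=1..t. r i - bb i)"
    unfolding e sum_subtractf[symmetric] by (rule sum.cong) auto
  also have "\<dots> \<ge> (\<Sum>i=1..t. d i)" using H by (intro sum_mono) auto
  finally show "(\<Sum>i=1..t. if i+3 \<le> 2*((t+3) div 2) then r i else bb i) - (\<Sum>i=1..t. if i+3 \<le> 2*1 then r i else bb i)
           \<ge> (\<Sum>i=1..t. d i)" .
next
  assume k: "k \<in> {1..(t+1) div 2}"
  define h where "h i = (if i+3 \<le> 2*(k+1) \<and> \<not> i+3 \<le> 2*k then r i - bb i else 0)" for i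
  have eq: "(\<Sum>i=1..t. if i+3 \<le> 2*(k+1) then r i else bb i) - (\<Sum>i=1..t. if i+3 \<le> 2*k then r i else bb i)
     = (\<Sum>i=1..t. h i)"
    unfolding sum_subtractf[symmetric] h_def by (rule sum.cong) auto
  have h0: "\<And>i. i \<in> {1..t} \<Longrightarrow> 0 \<le> h i" using H unfolding h_def by force
  have mem: "2*k - 1 \<in> {1..t}" using k t by (auto elim: oddE)
  have "1 \<le> h (2*k - 1)" using H mem k unfolding h_def by force
  also have "h (2*k-1) \<le> (\<Sum>i=1..t. h i)" by (rule member_le_sum[OF mem]) (use h0 in auto)
  finally have lo: "1 \<le> (\<Sum>i=1..t. h i)" .
  have D0: "0 \<le> D" using H mem by force
  have "(\<Sum>i=1..t. h i) \<le> (\<Sum>i=1..t. (if i = 2*k-2 then D else 0) + (if i = 2*k-1 then D else 0))"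
  proof (rule sum_mono)
    fix i assume i: "i \<in> {1..t}"
    show "h i \<le> (if i = 2*k-2 then D else 0) + (if i = 2*k-1 then D else 0)"
    proof (cases "i+3 \<le> 2*(k+1) \<and> \<not> i+3 \<le> 2*k")
      case True
      then have "i = 2*k-2 \<or> i = 2*k-1" by auto
      moreover have "2*k-2 \<noteq> 2*k-1" using k by auto
      ultimately show ?thesis using True H i D0 unfolding h_def by auto
    next
      case False
      then show ?thesis using D0 unfolding h_def by auto
    qed
  qed
  also have "\<dots> \<le> 2*D" unfolding sum.distrib using D0
    by (simp add: sum.delta)
  finally show "1 \<le> (\<Sum>i=1..t. if i+3 \<le> 2*(k+1) then r i else bb i) - (\<Sum>i=1..t. if i+3 \<le> 2*k then r i else bb i) \<and>
       (\<Sum>i=1..t. if i+3 \<le> 2*(k+1) then r i else bb i) - (\<Sum>i=1..t. if i+3 \<le> 2*k then r i else bb i) \<le> 2*D"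
    using lo eq by simp
qed

lemma infix_facts:
  assumes L: "L = p @ M @ s" and M: "M \<noteq> []"
  shows "length p + length M - 1 < length L" "hd M = L!(length p)" "last M = L!(length p + length M - 1)"
    "set M = {L!k|k. length p \<le> k \<and> k \<le> length p + length M - 1}"
    "path_edge M u v \<Longrightarrow> path_edge L u v"
proof -
  have nth: "\<And>j. j < length M \<Longrightarrow> M!j = L!(length p + j)" using L by (simp add: nth_append)
  show "length p + length M - 1 < length L" using L M by (cases M) auto
  show "hd M = L!(length p)" using nth[of 0] M by (simp add: hd_conv_nth)
  have "length p + length M - 1 = length p + (length M - 1)" using M by (cases M) auto
  then show "last M = L!(length p + length M - 1)" using nth[of "length M - 1"] M by (simp add: last_conv_nth)
  show "set M = {L!k|k. length p \<le> k \<and> k \<le> length p + length M - 1}"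
  proof
    show "set M \<subseteq> {L!k|k. length p \<le> k \<and> k \<le> length p + length M - 1}"
    proof
      fix x assume "x \<in> set M"
      then obtain j where j: "j < length M" "x = M!j" by (auto simp: in_set_conv_nth)
      then have "x = L!(length p + j)" "length p \<le> length p + j" "length p + j \<le> length p + length M - 1"
        using nth by auto
      then show "x \<in> {L!k|k. length p \<le> k \<and> k \<le> length p + length M - 1}" by blast
    qed
  next
    show "{L!k|k. length p \<le> k \<and> k \<le> length p + length M - 1} \<subseteq> set M"
    proof
      fix x assume "x \<in> {L!k|k. length p \<le> k \<and> k \<le> length p + length M - 1}"
      then obtain k where k: "x = L!k" "length p \<le> k" "k \<le> length p + length M - 1" by blast
      then have kk: "k - length p < length M" using M by (cases M) auto
      then have "x = M!(k - length p)" using nth[of "k - length p"] k by simp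
      then show "x \<in> set M" using kk by auto
    qed
  qed
  assume "path_edge M u v"
  then obtain i where i: "Suc i < length M" "(M ! i = u \<and> M ! Suc i = v) \<or> (M ! i = v \<and> M ! Suc i = u)"
    unfolding path_edge_def by blast
  have "Suc (length p + i) < length L" using i L by simp
  moreover have "M!i = L!(length p + i)" "M!Suc i = L!Suc (length p + i)" using nth[of i] nth[of "Suc i"] i by auto
  ultimately show "path_edge L u v" unfolding path_edge_def using i(2) by metis
qed

lemma H_lift:
  assumes "X = p @ Xs' @ s" "Y = q @ Ys' @ s'" "Xs' \<noteq> []" "Ys' \<noteq> []" "H_edge E Xs' Ys' u v"
  shows "H_edge E X Y u v"
proof -
  have "set Xs' \<subseteq> set X" "set Ys' \<subseteq> set Y" using assms(1,2) by auto
  then show ?thesis using assms(5) infix_facts(5)[OF assms(1,3)] infix_facts(5)[OF assms(2,4)]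
    unfolding H_edge_def by blast
qed

definition ori :: "'v \<Rightarrow> 'v list \<Rightarrow> 'v list" where
  "ori A P = (if hd P = A then P else rev P)"

lemma ori_facts:
  assumes "path_between P A B" "A \<noteq> B" "P \<noteq> []"
  shows "hd (ori A P) = A" "last (ori A P) = B" "set (ori A P) = set P" "plen (ori A P) = plen P"
    "is_path R P \<Longrightarrow> (\<And>u v. R u v \<Longrightarrow> R v u) \<Longrightarrow> is_path R (ori A P)"
  using assms rev_path[of R P] unfolding ori_def path_between_def
  by (auto simp: hd_rev last_rev)

theorem lemma4p5:
  fixes E :: "'v \<Rightarrow> 'v \<Rightarrow> bool"
    and X Y :: "'v list"
    and t :: nat
    and Xs Ys QR QB :: "nat \<Rightarrow> 'v list"
    and d :: "nat \<Rightarrow> int"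
  assumes graph: "simple_graph E"
    and sec: "section_pair E X Y"
    and t_odd: "odd t" and t_pos: "t \<ge> 1"
    and subs: "\<And>i. i \<in> {1..t} \<Longrightarrow> subsection_pair X Y (Xs i) (Ys i)"
    and Xdisj: "\<And>i j. i \<in> {1..t} \<Longrightarrow> j \<in> {1..t} \<Longrightarrow> i \<noteq> j \<Longrightarrow> set (Xs i) \<inter> set (Xs j) = {}"
    and Ydisj: "\<And>i j. i \<in> {1..t} \<Longrightarrow> j \<in> {1..t} \<Longrightarrow> i \<noteq> j \<Longrightarrow> set (Ys i) \<inter> set (Ys j) = {}"
    and order: "\<And>i j. 1 \<le> i \<Longrightarrow> i < j \<Longrightarrow> j \<le> t \<Longrightarrow>
                  above X (set (Xs i)) (set (Xs j)) \<and> below Y (set (Ys i)) (set (Ys j))"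
    and d_pos: "\<And>i. i \<in> {1..t} \<Longrightarrow> d i \<ge> 1"
    and Qpaths: "\<And>i. i \<in> {1..t} \<Longrightarrow>
                   path_in_H E (Xs i) (Ys i) (QR i) \<and> path_in_H E (Xs i) (Ys i) (QB i) \<and>
                   int (plen (QR i)) - int (plen (QB i)) \<ge> d i"
    and Qodd: "\<And>i. i \<in> {1..t} \<Longrightarrow> odd i \<Longrightarrow>
                   path_between (QR i) (hd (Xs i)) (hd (Ys i)) \<and>
                   path_between (QB i) (hd (Xs i)) (hd (Ys i))"
    and Qeven: "\<And>i. i \<in> {1..t} \<Longrightarrow> even i \<Longrightarrow>
                   path_between (QR i) (last (Xs i)) (last (Ys i)) \<and>
                   path_between (QB i) (last (Xs i)) (last (Ys i))"
  shows "\<exists>P :: nat \<Rightarrow> 'v list.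
           (\<forall>i \<in> {1..(t+3) div 2}. path_in_H E X Y (P i) \<and> path_between (P i) (hd X) (hd Y)) \<and>
           int (plen (P ((t+3) div 2))) - int (plen (P 1)) \<ge> (\<Sum>i=1..t. d i) \<and>
           (\<forall>i \<in> {1..(t+1) div 2}.
              1 \<le> int (plen (P (i+1))) - int (plen (P i)) \<and>
              int (plen (P (i+1))) - int (plen (P i))
                \<le> 2 * int (Max ((\<lambda>i. plen (Xs i) + plen (Ys i)) ` {1..t})))"
proof -
  have dX: "distinct X" and dY: "distinct Y" and XY: "set X \<inter> set Y = {}"
    using sec unfolding section_pair_def is_path_def by auto
  have symE: "\<And>u v. E u v \<Longrightarrow> E v u" using graph unfolding simple_graph_def by blast
  define R where "R = H_edge E X Y"
  have symR: "\<And>u v. R u v \<Longrightarrow> R v u" unfolding R_def H_edge_def path_edge_def using symE by blast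
  have RX: "\<And>k. Suc k < length X \<Longrightarrow> R (X!k) (X!Suc k)" unfolding R_def H_edge_def path_edge_def by blast
  have RY: "\<And>k. Suc k < length Y \<Longrightarrow> R (Y!k) (Y!Suc k)" unfolding R_def H_edge_def path_edge_def by blast
  have ne: "\<And>i. i \<in> {1..t} \<Longrightarrow> Xs i \<noteq> [] \<and> Ys i \<noteq> []" using subs unfolding subsection_pair_def by blast
  have "\<forall>i\<in>{1..t}. \<exists>p s. X = p @ Xs i @ s" using subs unfolding subsection_pair_def sublist_def by blast
  from bchoice[OF this] obtain pX where PX: "\<forall>i\<in>{1..t}. \<exists>s. X = pX i @ Xs i @ s" ..
  have "\<forall>i\<in>{1..t}. \<exists>p s. Y = p @ Ys i @ s" using subs unfolding subsection_pair_def sublist_def by blast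
  from bchoice[OF this] obtain pY where PY: "\<forall>i\<in>{1..t}. \<exists>s. Y = pY i @ Ys i @ s" ..
  define a where "a i = length (pX i)" for i
  define b where "b i = length (pX i) + length (Xs i) - 1" for i
  define al where "al i = length (pY i)" for i
  define be where "be i = length (pY i) + length (Ys i) - 1" for i
  have IX: "b i < length X \<and> a i \<le> b i \<and> hd (Xs i) = X!(a i) \<and> last (Xs i) = X!(b i) \<and>
      set (Xs i) = {X!k|k. a i \<le> k \<and> k \<le> b i}" if i: "i \<in> {1..t}" for i
  proof -
    obtain s where s: "X = pX i @ Xs i @ s" using PX i by blast
    have n: "Xs i \<noteq> []" using ne i by blast
    show ?thesis using infix_facts[OF s n] n unfolding a_def b_def by (cases "Xs i") auto
  qed
  have IY: "be i < length Y \<and> al i \<le> be i \<and> hd (Ys i) = Y!(al i) \<and> last (Ys i) = Y!(be i) \<and>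
      set (Ys i) = {Y!k|k. al i \<le> k \<and> k \<le> be i}" if i: "i \<in> {1..t}" for i
  proof -
    obtain s where s: "Y = pY i @ Ys i @ s" using PY i by blast
    have n: "Ys i \<noteq> []" using ne i by blast
    show ?thesis using infix_facts[OF s n] n unfolding al_def be_def by (cases "Ys i") auto
  qed
  have ordX: "b i < a j" if ij: "1 \<le> i" "i < j" "j \<le> t" for i j
  proof -
    have i: "i \<in> {1..t}" and j: "j \<in> {1..t}" using ij by auto
    have ab: "above X (set (Xs i)) (set (Xs j))" using order[OF ij] by blast
    have "last (Xs i) \<in> set (Xs i)" "hd (Xs j) \<in> set (Xs j)" using ne i j by auto
    then obtain i' j' where ij': "i' < j'" "j' < length X" "X!i' = X!(b i)" "X!j' = X!(a j)"
      using ab IX[OF i] IX[OF j] unfolding above_def by metis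
    have "i' = b i" using ij' IX[OF i] dX by (simp add: nth_eq_iff_index_eq)
    moreover have "j' = a j" using ij' IX[OF j] dX
      by (metis le_less_trans nth_eq_iff_index_eq)
    ultimately show ?thesis using ij' by simp
  qed
  have ordY: "be j < al i" if ij: "1 \<le> i" "i < j" "j \<le> t" for i j
  proof -
    have i: "i \<in> {1..t}" and j: "j \<in> {1..t}" using ij by auto
    have ab: "above Y (set (Ys j)) (set (Ys i))" using order[OF ij] unfolding below_def by blast
    have "last (Ys j) \<in> set (Ys j)" "hd (Ys i) \<in> set (Ys i)" using ne i j by auto
    then obtain i' j' where ij': "i' < j'" "j' < length Y" "Y!i' = Y!(be j)" "Y!j' = Y!(al i)"
      using ab IY[OF i] IY[OF j] unfolding above_def by metis
    have "i' = be j" using ij' IY[OF j] dY by (simp add: nth_eq_iff_index_eq)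
    moreover have "j' = al i" using ij' IY[OF i] dY
      by (metis le_less_trans nth_eq_iff_index_eq)
    ultimately show ?thesis using ij' by simp
  qed
  interpret C: cs R X Y t a b al be
  proof (unfold_locales)
    show "\<And>u v. R u v \<Longrightarrow> R v u" by (rule symR)
    show "distinct X" "distinct Y" "set X \<inter> set Y = {}" by (fact dX dY XY)+
    show "\<And>k. Suc k < length X \<Longrightarrow> R (X!k) (X!Suc k)" by (rule RX)
    show "\<And>k. Suc k < length Y \<Longrightarrow> R (Y!k) (Y!Suc k)" by (rule RY)
    show "1 \<le> t" by (rule t_pos)
    show "\<And>i. i \<in> {1..t} \<Longrightarrow> a i \<le> b i \<and> b i < length X \<and> al i \<le> be i \<and> be i < length Y"
      using IX IY by blast
    show "\<And>i j. 1 \<le> i \<Longrightarrow> i < j \<Longrightarrow> j \<le> t \<Longrightarrow> b i < a j" by (rule ordX)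
    show "\<And>i j. 1 \<le> i \<Longrightarrow> i < j \<Longrightarrow> j \<le> t \<Longrightarrow> be j < al i" by (rule ordY)
  qed
  define A where "A i = (if odd i then X!(a i) else Y!(be i))" for i
  define B where "B i = (if odd i then Y!(al i) else X!(b i))" for i
  have AB: "A i \<noteq> B i" if i: "i \<in> {1..t}" for i
  proof -
    have h: "a i < length X" "al i < length Y" "b i < length X" "be i < length Y" using IX[OF i] IY[OF i] by auto
    show ?thesis unfolding A_def B_def using C.XneY[OF h(1,2)] C.XneY[OF h(3,4)] by auto
  qed
  have pb: "path_between (QR i) (A i) (B i) \<and> path_between (QB i) (A i) (B i)" if i: "i \<in> {1..t}" for i
  proof (cases "odd i")
    case True
    then show ?thesis using Qodd[OF i True] IX[OF i] IY[OF i] unfolding A_def B_def by simp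
  next
    case False
    then show ?thesis using Qeven[OF i] IX[OF i] IY[OF i] unfolding A_def B_def path_between_def by auto
  qed
  have QokG: "C.Qok Q i" if i: "i \<in> {1..t}" and P: "path_in_H E (Xs i) (Ys i) P"
    and pbP: "path_between P (A i) (B i)" and Qi: "Q i = ori (A i) P" for P Q i
  proof -
    obtain s where s: "X = pX i @ Xs i @ s" using PX i by blast
    obtain s' where s': "Y = pY i @ Ys i @ s'" using PY i by blast
    have Pp: "is_path (H_edge E (Xs i) (Ys i)) P" and Ps: "set P \<subseteq> set (Xs i) \<union> set (Ys i)"
      using P unfolding path_in_H_def by auto
    have PR: "is_path R P" using Pp H_lift[OF s s'] ne[OF i] unfolding is_path_def R_def
      by (auto elim!: successively_mono)
    have Pne: "P \<noteq> []" using Pp unfolding is_path_def by simp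
    note O = ori_facts[OF pbP AB[OF i] Pne]
    show ?thesis unfolding C.Qok_def Qi
      using O(1,2,3) O(5)[OF PR symR] Ps IX[OF i] IY[OF i] unfolding A_def B_def by auto
  qed
  define QRo where "QRo i = ori (A i) (QR i)" for i
  define QBo where "QBo i = ori (A i) (QB i)" for i
  define Qc where "Qc k i = (if i + 3 \<le> 2*k then QRo i else QBo i)" for k i
  have Qc_ok: "\<forall>i\<in>{1..t}. C.Qok (Qc k) i" for k
  proof
    fix i assume i: "i \<in> {1..t}"
    show "C.Qok (Qc k) i"
    proof (cases "i + 3 \<le> 2*k")
      case True
      then show ?thesis using QokG[OF i _ _, of "QR i" "Qc k"] Qpaths[OF i] pb[OF i]
        unfolding Qc_def QRo_def by simp
    next
      case False
      then show ?thesis using QokG[OF i _ _, of "QB i" "Qc k"] Qpaths[OF i] pb[OF i]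
        unfolding Qc_def QBo_def by simp
    qed
  qed
  have plenQc: "plen (Qc k i) = (if i + 3 \<le> 2*k then plen (QR i) else plen (QB i))" if i: "i \<in> {1..t}" for k i
  proof -
    have "QR i \<noteq> []" "QB i \<noteq> []" using Qpaths[OF i] unfolding path_in_H_def is_path_def by auto
    then show ?thesis using ori_facts(4)[OF conjunct1[OF pb[OF i]] AB[OF i]]
      ori_facts(4)[OF conjunct2[OF pb[OF i]] AB[OF i]] unfolding Qc_def QRo_def QBo_def by simp
  qed
  define P where "P k = glue (Wc X Y a b al be (Qc k) t) (rev (seg Y 0 (al t)))" for k
  define K where "K = (\<Sum>m<t. connS a b al be m) + al t"
  have Pfacts: "path_in_H E X Y (P k) \<and> path_between (P k) (hd X) (hd Y) \<and>
      plen (P k) = K + (\<Sum>i\<in>{1..t}. plen (Qc k i))" for k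
  proof -
    note F = C.final[OF t_odd Qc_ok[of k]]
    have "X \<noteq> []" "Y \<noteq> []" using sec unfolding section_pair_def is_path_def by auto
    then show ?thesis using F unfolding P_def K_def path_in_H_def path_between_def R_def
      by (simp add: hd_conv_nth add.assoc)
  qed
  define r where "r i = int (plen (QR i))" for i
  define bb where "bb i = int (plen (QB i))" for i
  define D where "D = int (Max ((\<lambda>i. plen (Xs i) + plen (Ys i)) ` {1..t}))"
  have Fk: "int (plen (P k)) = int K + (\<Sum>i=1..t. if i+3 \<le> 2*k then r i else bb i)" for k
    using Pfacts[of k] plenQc unfolding r_def bb_def by (simp add: of_nat_sum) (auto intro!: sum.cong)
  have bounds: "\<forall>i\<in>{1..t}. d i \<le> r i - bb i \<and> 1 \<le> d i \<and> r i - bb i \<le> D"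
  proof
    fix i assume i: "i \<in> {1..t}"
    have QRH: "path_in_H E (Xs i) (Ys i) (QR i)" and QBH: "path_in_H E (Xs i) (Ys i) (QB i)"
      and dd: "d i \<le> r i - bb i" using Qpaths[OF i] unfolding r_def bb_def by auto
    have "length (QR i) = card (set (QR i))" using QRH unfolding path_in_H_def is_path_def
      by (simp add: distinct_card)
    also have "\<dots> \<le> card (set (Xs i) \<union> set (Ys i))"
      using QRH unfolding path_in_H_def by (intro card_mono) auto
    also have "\<dots> \<le> card (set (Xs i)) + card (set (Ys i))" by (rule card_Un_le)
    also have "\<dots> \<le> length (Xs i) + length (Ys i)" by (intro add_mono card_length)
    finally have lR: "length (QR i) \<le> length (Xs i) + length (Ys i)" .
    have "hd (QB i) \<noteq> last (QB i)" using pb[OF i] AB[OF i] unfolding path_between_def by auto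
    moreover have "QB i \<noteq> []" using QBH unfolding path_in_H_def is_path_def by simp
    ultimately have lB: "2 \<le> length (QB i)"
    proof (cases "QB i")
      case (Cons x xs)
      then show ?thesis using \<open>hd (QB i) \<noteq> last (QB i)\<close> by (cases xs) auto
    qed simp
    have "r i - bb i \<le> int (plen (Xs i) + plen (Ys i))"
      using lR lB ne[OF i] unfolding r_def bb_def plen_def
      by (cases "Xs i"; cases "Ys i") auto
    also have "\<dots> \<le> D" unfolding D_def using i by (intro of_nat_mono Max_ge) auto
    finally show "d i \<le> r i - bb i \<and> 1 \<le> d i \<and> r i - bb i \<le> D" using dd d_pos[OF i] by auto
  qed
  note AR = arith_part[OF t_odd bounds]
  show ?thesis
  proof (intro exI[of _ P] conjI ballI)
    fix i show "path_in_H E X Y (P i)" "path_between (P i) (hd X) (hd Y)" using Pfacts by auto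
  next
    show "int (plen (P ((t+3) div 2))) - int (plen (P 1)) \<ge> (\<Sum>i=1..t. d i)"
      unfolding Fk using AR(1) by simp
  next
    fix k assume k: "k \<in> {1..(t+1) div 2}"
    show "1 \<le> int (plen (P (k+1))) - int (plen (P k))"
      "int (plen (P (k+1))) - int (plen (P k)) \<le> 2 * int (Max ((\<lambda>i. plen (Xs i) + plen (Ys i)) ` {1..t}))"
      unfolding Fk using AR(2)[OF k] unfolding D_def by simp_all
  qed
qed

end
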